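(* Let $\mathbf{P}=\{p_n(x)\}_{n\ge0}$ be a sequence of complex polynomials with $\deg p_n=n$, $p_0=1$, and let $\bar{\mathbf{P}}=\{\bar p_n(x)\}$ with $\bar p_0(x)=1$, $\bar p_n(x)=xp_{n-1}(x)$ for $n\ge1$. Then for all $n\ge0$, $$A_{n+1}(x;\bar{\mathbf{P}})=(1+nx)A_n(x;\mathbf{P})+x(1-x)A_n'(x;\mathbf{P}),$$ where $'$ denotes the derivative in $x$.
   Context: For any sequence $\mathbf{Q}=\{q_n\}$ with $\deg q_n=n$, $q_0=1$, the Eulerian numbers $A_{n,k}(\mathbf{Q})$ ($0\le k\le n$) are the unique coefficients with $q_n(x)=\sum_{k=0}^{n}A_{n,k}(\mathbf{Q})\binom{x+n-k-1}{n}$, where $\binom{y}{n}=y(y-1)\cdots(y-n+1)/n!$, and $A_n(x;\mathbf{Q})=\sum_{k=0}^n A_{n,k}(\mathbf{Q})x^k$. *)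

theory Defs
  imports Complex_Main "HOL-Computational_Algebra.Polynomial"
begin

definition binom_poly :: "complex \<Rightarrow> nat \<Rightarrow> complex poly" where
  "binom_poly a n = smult (1 / of_nat (fact n)) (\<Prod>i<n. [:a - of_nat i, 1:])"

definition eulerian_num :: "(nat \<Rightarrow> complex poly) \<Rightarrow> nat \<Rightarrow> nat \<Rightarrow> complex" where
  "eulerian_num Q n = (THE A. (\<forall>k>n. A k = 0) \<and>
      Q n = (\<Sum>k\<le>n. smult (A k) (binom_poly (of_int (int n - int k - 1)) n)))"

definition eulerian_poly :: "(nat \<Rightarrow> complex poly) \<Rightarrow> nat \<Rightarrow> complex poly" where
  "eulerian_poly Q n = (\<Sum>k\<le>n. monom (eulerian_num Q n k) k)"

end

theory Submission imports Defs begin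

definition BB :: "nat \<Rightarrow> nat \<Rightarrow> complex poly" where
  "BB n k = binom_poly (of_int (int n - int k - 1)) n"

lemma bp_Suc_shift: "binom_poly (a+1) (Suc n) = smult (1/of_nat (Suc n)) ([:a+1,1:] * binom_poly a n)"
  unfolding binom_poly_def
  by (simp only: prod.lessThan_Suc_shift) (simp add: mult_smult_right field_simps)

lemma bp_Suc: "binom_poly a (Suc n) = smult (1/of_nat (Suc n)) ([:a - of_nat n,1:] * binom_poly a n)"
  unfolding binom_poly_def
  by (simp add: mult_smult_right field_simps)

lemma bp_x: "[:0,1:] * binom_poly a n = smult (of_nat n - a) (binom_poly (a+1) (Suc n)) + smult (a+1) (binom_poly a (Suc n))"
proof -
  have "smult ((of_nat n - a)/of_nat (Suc n)) [:a+1,1:] + smult ((a+1)/of_nat (Suc n)) [:a - of_nat n,1:] = [:0,1:]"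
  proof -
    have d: "(1 + of_nat n :: complex) \<noteq> 0"
      by (metis of_nat_Suc of_nat_eq_0_iff nat.distinct(1) add.commute)
    have e1: "(of_nat n - a) / (1 + of_nat n) * (a + 1) + (a + 1) / (1 + of_nat n) * (a - of_nat n) = 0"
      using d by (simp add: field_simps)
    have "(of_nat n - a) / (1 + of_nat n) + (a + 1) / (1 + of_nat n) = ((of_nat n - a) + (a + 1)) / (1 + of_nat n)"
      by (rule add_divide_distrib[symmetric])
    also have "(of_nat n - a) + (a + 1) = 1 + of_nat n" by simp
    finally have e2: "(of_nat n - a) / (1 + of_nat n) + (a + 1) / (1 + of_nat n) = 1"
      using d by simp
    show ?thesis using e1 e2 by (simp add: algebra_simps)
  qed
  then have "[:0,1:] * binom_poly a n = (smult ((of_nat n - a)/of_nat (Suc n)) [:a+1,1:] + smult ((a+1)/of_nat (Suc n)) [:a - of_nat n,1:]) * binom_poly a n" by simp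
  also have "\<dots> = smult (of_nat n - a) (smult (1/of_nat (Suc n)) ([:a+1,1:] * binom_poly a n)) + smult (a+1) (smult (1/of_nat (Suc n)) ([:a - of_nat n,1:] * binom_poly a n))"
    by (simp only: distrib_right mult_smult_left smult_smult times_divide_eq_right mult_1_right)
  finally show ?thesis unfolding bp_Suc_shift bp_Suc[of a] .
qed

lemma bp_diff: "binom_poly a n = binom_poly (a+1) (Suc n) - binom_poly a (Suc n)"
proof -
  have "smult (1/of_nat (Suc n)) [:a+1,1:] - smult (1/of_nat (Suc n)) [:a - of_nat n,1:] = 1"
  proof -
    have d: "(1 + of_nat n :: complex) \<noteq> 0"
      by (metis of_nat_Suc of_nat_eq_0_iff nat.distinct(1) add.commute)
    have "1 / (1 + of_nat n) * (a + 1) - 1 / (1 + of_nat n) * (a - of_nat n) = ((a+1) - (a - of_nat n)) / (1 + of_nat n)"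
      by (simp only: times_divide_eq_left mult_1_left diff_divide_distrib)
    also have "(a+1) - (a - of_nat n) = 1 + of_nat n" by simp
    finally have e1: "1 / (1 + of_nat n) * (a + 1) - 1 / (1 + of_nat n) * (a - of_nat n) = (1::complex)" using d by simp
    show ?thesis using e1 by (simp add: algebra_simps one_pCons)
  qed
  then have "binom_poly a n = (smult (1/of_nat (Suc n)) [:a+1,1:] - smult (1/of_nat (Suc n)) [:a - of_nat n,1:]) * binom_poly a n" by simp
  also have "\<dots> = smult (1/of_nat (Suc n)) ([:a+1,1:] * binom_poly a n) - smult (1/of_nat (Suc n)) ([:a - of_nat n,1:] * binom_poly a n)"
    by (simp only: left_diff_distrib mult_smult_left)
  finally show ?thesis unfolding bp_Suc_shift bp_Suc[of a] .
qed

lemma BB_shift: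
  "BB (Suc n) k = binom_poly (of_int (int n - int k - 1) + 1) (Suc n)"
  "BB (Suc n) (Suc k) = binom_poly (of_int (int n - int k - 1)) (Suc n)"
proof -
  have "int (Suc n) - int k - 1 = (int n - int k - 1) + 1" by simp
  then have "(of_int (int (Suc n) - int k - 1) :: complex) = of_int (int n - int k - 1) + 1"
    by (simp only: of_int_add of_int_1)
  then show "BB (Suc n) k = binom_poly (of_int (int n - int k - 1) + 1) (Suc n)"
    unfolding BB_def by (simp only:)
  have "int (Suc n) - int (Suc k) - 1 = int n - int k - 1" by simp
  then show "BB (Suc n) (Suc k) = binom_poly (of_int (int n - int k - 1)) (Suc n)"
    unfolding BB_def by (simp only:)
qed

lemma BB_x: "[:0,1:] * BB n k = smult (of_nat k + 1) (BB (Suc n) k) + smult (of_nat n - of_nat k) (BB (Suc n) (Suc k))"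
proof -
  define a :: complex where "a = of_int (int n - int k - 1)"
  have h1: "BB (Suc n) k = binom_poly (a+1) (Suc n)" unfolding a_def by (rule BB_shift(1))
  have h2: "BB (Suc n) (Suc k) = binom_poly a (Suc n)" unfolding a_def by (rule BB_shift(2))
  have e1: "of_nat n - a = of_nat k + 1" unfolding a_def by simp
  have e2: "a + 1 = of_nat n - of_nat k" unfolding a_def by simp
  have "[:0,1:] * BB n k = smult (of_nat n - a) (binom_poly (a+1) (Suc n)) + smult (a+1) (binom_poly a (Suc n))"
    unfolding BB_def a_def[symmetric] by (rule bp_x)
  also have "\<dots> = smult (of_nat n - a) (BB (Suc n) k) + smult (a+1) (BB (Suc n) (Suc k))"
    unfolding h1 h2 ..
  also have "\<dots> = smult (of_nat k + 1) (BB (Suc n) k) + smult (of_nat n - of_nat k) (BB (Suc n) (Suc k))"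
    unfolding e1 e2 ..
  finally show ?thesis .
qed

lemma BB_diff: "BB n k = BB (Suc n) k - BB (Suc n) (Suc k)"
proof -
  define a :: complex where "a = of_int (int n - int k - 1)"
  have h1: "BB (Suc n) k = binom_poly (a+1) (Suc n)" unfolding a_def by (rule BB_shift(1))
  have h2: "BB (Suc n) (Suc k) = binom_poly a (Suc n)" unfolding a_def by (rule BB_shift(2))
  show ?thesis unfolding h1 h2 unfolding BB_def a_def[symmetric] by (rule bp_diff)
qed

definition rep :: "nat \<Rightarrow> (nat \<Rightarrow> complex) \<Rightarrow> complex poly" where
  "rep n A = (\<Sum>k\<le>n. smult (A k) (BB n k))"

lemma shift_sum:
  "(\<Sum>k\<le>n. smult (u k) (F k) + smult (v k) (F (Suc k))) =
   (\<Sum>j\<le>Suc n. smult ((if j \<le> n then u j else 0) + (if j = 0 then 0 else v (j-1))) (F j))"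
proof -
  have "(\<Sum>j\<le>Suc n. smult ((if j \<le> n then u j else 0) + (if j = 0 then 0 else v (j-1))) (F j))
     = (\<Sum>j\<le>Suc n. smult (if j \<le> n then u j else 0) (F j)) + (\<Sum>j\<le>Suc n. smult (if j = 0 then 0 else v (j-1)) (F j))"
    by (simp add: smult_add_left sum.distrib)
  also have "(\<Sum>j\<le>Suc n. smult (if j \<le> n then u j else 0) (F j)) = (\<Sum>k\<le>n. smult (u k) (F k))"
    by (simp add: sum.atMost_Suc)
  also have "(\<Sum>j\<le>Suc n. smult (if j = 0 then 0 else v (j-1)) (F j)) = (\<Sum>k\<le>n. smult (v k) (F (Suc k)))"
    by (subst sum.atMost_Suc_shift) simp
  finally show ?thesis by (simp add: sum.distrib)
qed

lemma poly_BB: "poly (BB n k) x = (1 / fact n) * (\<Prod>i<n. x + of_int (int n - int k - 1) - of_nat i)"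
  by (simp add: BB_def binom_poly_def poly_prod algebra_simps)

lemma BB_zero:
  assumes "k \<le> n" "j < k"
  shows "poly (BB n k) (of_nat (Suc j)) = 0"
proof -
  have "n + j - k < n" "n + j - k \<in> {..<n}" using assms by auto
  moreover have "of_nat (Suc j) + of_int (int n - int k - 1) - of_nat (n + j - k) = (0::complex)"
    using assms by (simp add: of_nat_diff)
  ultimately have "(\<Prod>i<n. (of_nat (Suc j) :: complex) + of_int (int n - int k - 1) - of_nat i) = 0"
    by (metis (no_types, lifting) finite_lessThan prod_zero_iff)
  then show ?thesis by (simp add: poly_BB)
qed

lemma prod_fact: "(\<Prod>i<n. (of_nat n - of_nat i :: complex)) = fact n"
proof (induction n)
  case 0 then show ?case by simp
next
  case (Suc m)
  have "(\<Prod>i<Suc m. (of_nat (Suc m) - of_nat i :: complex)) = of_nat (Suc m) * (\<Prod>i<m. (of_nat (Suc m) - of_nat (Suc i) :: complex))"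
    by (simp only: prod.lessThan_Suc_shift) simp
  also have "(\<Prod>i<m. (of_nat (Suc m) - of_nat (Suc i) :: complex)) = (\<Prod>i<m. (of_nat m - of_nat i :: complex))"
    by simp
  finally show ?case using Suc by (simp add: fact_Suc)
qed

lemma BB_one:
  assumes "k \<le> n"
  shows "poly (BB n k) (of_nat (Suc k)) = 1"
proof -
  have "\<And>i. (of_nat (Suc k) :: complex) + of_int (int n - int k - 1) - of_nat i = of_nat n - of_nat i"
    using assms by simp
  then show ?thesis by (simp add: poly_BB prod_fact)
qed

lemma rep_uniq:
  assumes "\<forall>k>n. c k = 0" "rep n c = 0"
  shows "c j = 0"
proof (induction j rule: less_induct)
  case (less j)
  show ?case
  proof (cases "j \<le> n")
    case False then show ?thesis using assms by simp
  next
    case True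
    have "0 = poly (rep n c) (of_nat (Suc j))" using assms by simp
    also have "\<dots> = (\<Sum>k\<le>n. c k * poly (BB n k) (of_nat (Suc j)))"
      by (simp add: rep_def poly_sum)
    also have "\<dots> = c j * poly (BB n j) (of_nat (Suc j)) + (\<Sum>k\<in>{..n} - {j}. c k * poly (BB n k) (of_nat (Suc j)))"
      using True by (simp add: sum.remove)
    also have "(\<Sum>k\<in>{..n} - {j}. c k * poly (BB n k) (of_nat (Suc j))) = 0"
    proof (rule sum.neutral, rule ballI)
      fix k assume k: "k \<in> {..n} - {j}"
      show "c k * poly (BB n k) (of_nat (Suc j)) = 0"
      proof (cases "k < j")
        case True then show ?thesis using less by simp
      next
        case False then show ?thesis using k BB_zero[of k n j] by simp
      qed
    qed
    finally show ?thesis using BB_one[OF True] by simp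
  qed
qed

lemma eulerian_num_eq:
  assumes "\<forall>k>n. A k = 0" "Q n = rep n A"
  shows "eulerian_num Q n = A"
  unfolding eulerian_num_def
proof (rule the_equality)
  show "(\<forall>k>n. A k = 0) \<and> Q n = (\<Sum>k\<le>n. smult (A k) (binom_poly (of_int (int n - int k - 1)) n))"
    using assms by (simp add: rep_def BB_def)
next
  fix B assume B: "(\<forall>k>n. B k = 0) \<and> Q n = (\<Sum>k\<le>n. smult (B k) (binom_poly (of_int (int n - int k - 1)) n))"
  have "rep n (\<lambda>k. B k - A k) = rep n B - rep n A"
    by (simp add: rep_def smult_diff_left sum_subtractf)
  also have "\<dots> = 0" using B assms by (simp add: rep_def BB_def)
  finally have "\<And>j. B j - A j = 0"
    by (rule rep_uniq[rotated]) (use B assms in auto)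
  then show "B = A" by auto
qed

definition xco :: "nat \<Rightarrow> (nat \<Rightarrow> complex) \<Rightarrow> nat \<Rightarrow> complex" where
  "xco n A j = (if j \<le> n then A j * (of_nat j + 1) else 0) + (if j = 0 then 0 else A (j-1) * (of_nat n - of_nat (j-1)))"

lemma rep_x: "[:0,1:] * rep n A = rep (Suc n) (xco n A)"
proof -
  have "[:0,1:] * rep n A = (\<Sum>k\<le>n. smult (A k) ([:0,1:] * BB n k))"
    by (simp only: rep_def sum_distrib_left mult_smult_right)
  also have "\<dots> = (\<Sum>k\<le>n. smult (A k * (of_nat k + 1)) (BB (Suc n) k) + smult (A k * (of_nat n - of_nat k)) (BB (Suc n) (Suc k)))"
    by (simp only: BB_x smult_add_right smult_smult)
  also have "\<dots> = rep (Suc n) (xco n A)"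
    unfolding rep_def xco_def by (rule shift_sum[of "\<lambda>k. A k * (of_nat k + 1)" "BB (Suc n)" "\<lambda>k. A k * (of_nat n - of_nat k)" n])
  finally show ?thesis .
qed

lemma xco_zero: "\<forall>k>n. A k = 0 \<Longrightarrow> \<forall>k>Suc n. xco n A k = 0"
  by (auto simp: xco_def)

definition lco :: "nat \<Rightarrow> (nat \<Rightarrow> complex) \<Rightarrow> nat \<Rightarrow> complex" where
  "lco n A j = (if j \<le> n then A j else 0) + (if j = 0 then 0 else - A (j-1))"

lemma rep_lift: "rep n A = rep (Suc n) (lco n A)"
proof -
  have "rep n A = (\<Sum>k\<le>n. smult (A k) (BB (Suc n) k) + smult (- A k) (BB (Suc n) (Suc k)))"
    unfolding rep_def by (subst BB_diff) (simp add: smult_diff_right)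
  also have "\<dots> = rep (Suc n) (lco n A)"
    unfolding rep_def lco_def by (rule shift_sum[of A "BB (Suc n)" "\<lambda>k. - A k" n])
  finally show ?thesis .
qed

lemma lco_zero: "\<forall>k>n. A k = 0 \<Longrightarrow> \<forall>k>Suc n. lco n A k = 0"
  by (auto simp: lco_def)

lemma rep_add: "rep n A + rep n B = rep n (\<lambda>k. A k + B k)"
  by (simp add: rep_def smult_add_left sum.distrib)

lemma spanning: "degree p \<le> n \<Longrightarrow> \<exists>A. (\<forall>k>n. A k = 0) \<and> p = rep n A"
proof (induction n arbitrary: p)
  case 0
  then have "p = [:coeff p 0:]" by (metis degree_0_id le_zero_eq)
  moreover have "BB 0 0 = 1" by (simp add: BB_def binom_poly_def)
  ultimately show ?case
    by (intro exI[of _ "\<lambda>k. if k = 0 then coeff p 0 else 0"]) (simp add: rep_def)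
next
  case (Suc n)
  obtain a q where pq: "p = pCons a q" by (cases p)
  have "degree q \<le> n" using Suc.prems pq by (cases "q = 0") auto
  then obtain B where B: "\<forall>k>n. B k = 0" "q = rep n B" using Suc.IH by blast
  obtain C where C: "\<forall>k>n. C k = 0" "[:a:] = rep n C" using Suc.IH[of "[:a:]"] by auto
  have "p = [:a:] + [:0,1:] * q" using pq by simp
  also have "\<dots> = rep n C + [:0,1:] * rep n B" using B(2) C(2) by simp
  also have "\<dots> = rep (Suc n) (lco n C) + rep (Suc n) (xco n B)"
    by (subst rep_lift[of n C], subst rep_x, rule refl)
  also have "\<dots> = rep (Suc n) (\<lambda>k. lco n C k + xco n B k)" by (rule rep_add)
  finally show ?case
    using lco_zero[OF C(1)] xco_zero[OF B(1)] by (intro exI[of _ "\<lambda>k. lco n C k + xco n B k"]) auto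
qed

lemma coeff_ep: "\<forall>k>m. C k = 0 \<Longrightarrow> coeff (\<Sum>k\<le>m. monom (C k) k) i = C i"
  by (auto simp: coeff_sum coeff_monom)

theorem theorem3p3:
  fixes p :: "nat \<Rightarrow> complex poly" and n :: nat
  assumes "\<And>m. degree (p m) = m"
    and "p 0 = 1"
  shows "eulerian_poly (\<lambda>m. if m = 0 then 1 else [:0, 1:] * p (m - 1)) (n + 1)
         = [:1, of_nat n:] * eulerian_poly p n
           + [:0, 1:] * [:1, -1:] * pderiv (eulerian_poly p n)"
proof -
  define Q where "Q = (\<lambda>m. if m = 0 then 1 else [:0, 1:] * p (m - 1))"
  obtain A where A: "\<forall>k>n. A k = 0" "p n = rep n A"
    using spanning[of "p n" n] assms(1) by auto
  have eA: "eulerian_num p n = A" by (rule eulerian_num_eq[of n A p, OF A])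
  have "Q (Suc n) = rep (Suc n) (xco n A)" using A rep_x by (simp add: Q_def)
  then have eQ: "eulerian_num Q (Suc n) = xco n A"
    by (rule eulerian_num_eq[of "Suc n" "xco n A" Q, OF xco_zero[OF A(1)]])
  define E where "E = eulerian_poly p n"
  have cE: "\<And>i. coeff E i = A i" unfolding E_def eulerian_poly_def eA using coeff_ep[OF A(1)] .
  have cL: "\<And>i. coeff (eulerian_poly Q (Suc n)) i = xco n A i"
    unfolding eulerian_poly_def eQ using coeff_ep[OF xco_zero[OF A(1)]] .
  have r1: "[:1, of_nat n:] * E = E + pCons 0 (smult (of_nat n) E)" by simp
  have r2: "[:0, 1:] * [:1, -1:] * pderiv E = pCons 0 (pderiv E - pCons 0 (pderiv E))"
    by (simp add: algebra_simps)
  have ci: "coeff (eulerian_poly Q (Suc n)) i = coeff (E + pCons 0 (smult (of_nat n) E) + pCons 0 (pderiv E - pCons 0 (pderiv E))) i" for i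
    proof (cases i)
      case 0 then show ?thesis by (simp add: cE cL xco_def)
    next
      case (Suc j)
      then show ?thesis
      proof (cases j)
        case 0 then show ?thesis using Suc A(1) by (simp add: cE cL xco_def coeff_pderiv)
      next
        case (Suc m)
        have x1: "xco n A (Suc (Suc m)) = A (Suc (Suc m)) * (of_nat m + 2 + 1) + A (Suc m) * (of_nat n - of_nat (Suc m))"
        proof (cases "Suc (Suc m) \<le> n")
          case True then show ?thesis by (simp add: xco_def)
        next
          case False
          then have "A (Suc (Suc m)) = 0" using A(1) by simp
          then show ?thesis using False by (simp add: xco_def)
        qed
        have x2: "coeff (E + pCons 0 (smult (of_nat n) E)) (Suc (Suc m)) + coeff (pCons 0 (pderiv E - pCons 0 (pderiv E))) (Suc (Suc m))
           = A (Suc (Suc m)) + of_nat n * A (Suc m) + (of_nat (Suc (Suc m)) * A (Suc (Suc m)) - of_nat (Suc m) * A (Suc m))"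
          by (simp only: coeff_add coeff_pCons_Suc coeff_smult coeff_diff coeff_pderiv cE)
        have i2: "i = Suc (Suc m)" using \<open>i = Suc j\<close> Suc by simp
        have "coeff (eulerian_poly Q (Suc n)) i = xco n A (Suc (Suc m))" using cL i2 by simp
        also have "\<dots> = A (Suc (Suc m)) * (of_nat m + 2 + 1) + A (Suc m) * (of_nat n - of_nat (Suc m))" by (rule x1)
        also have "\<dots> = A (Suc (Suc m)) + of_nat n * A (Suc m) + (of_nat (Suc (Suc m)) * A (Suc (Suc m)) - of_nat (Suc m) * A (Suc m))"
          by (simp add: algebra_simps)
        also have "\<dots> = coeff (E + pCons 0 (smult (of_nat n) E)) (Suc (Suc m)) + coeff (pCons 0 (pderiv E - pCons 0 (pderiv E))) (Suc (Suc m))"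
          by (rule x2[symmetric])
        also have "\<dots> = coeff (E + pCons 0 (smult (of_nat n) E) + pCons 0 (pderiv E - pCons 0 (pderiv E))) (Suc (Suc m))"
          by (simp only: coeff_add)
        finally show ?thesis using i2 by simp
      qed
    qed
  have "eulerian_poly Q (Suc n) = [:1, of_nat n:] * E + [:0, 1:] * [:1, -1:] * pderiv E"
    unfolding r1 r2 by (rule poly_eqI) (rule ci)
  then show ?thesis unfolding Q_def E_def Suc_eq_plus1 .
qed

end
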